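(* Let $(G,d)$ be a boundedly compact $p$-uniformly convex metric space with $p>1$ and $c>0$, $f:G\to\mathbb{R}$ proper, convex and lower semicontinuous, $\lambda>0$. Then: (i) $\operatorname{argmin}f\subset\mathrm{Fix}\,\mathrm{prox}^p_{f,\lambda}$; (ii) for all $x,y\in G$, with $x_+=\mathrm{prox}^p_{f,\lambda}(x)$, $y_+=\mathrm{prox}^p_{f,\lambda}(y)$: $\Delta^{(p,c)}(x,y,x_+,y_+)\ge\frac{c^2}{4}d(x_+,y_+)^p$; (iii) if $c\in(3/2,2]$, then for all $x,y\in G$, $$d(x_+,y_+)^p\le(1+\epsilon_c)d(x,y)^p-\frac{1-\alpha_c}{\alpha_c}\psi^{(p,c)}(x,y,x_+,y_+),\quad\alpha_c=\frac{c(c-1)}{2+c(c-1)},\ \epsilon_c=\frac{2-c}{c-1},$$ i.e. $\mathrm{prox}^p_{f,\lambda}$ is a$\alpha$-fne on $G$ with constant $\alpha_c$ and violation $\epsilon_c$.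
   Context: $(G,d)$ uniquely geodesic; $(1-\tau)x\oplus\tau y$ is the point on the geodesic from $x$ to $y$ at distance $\tau d(x,y)$ from $x$. $p$-uniform convexity with constant $c$: $d(z,(1-\tau)x\oplus\tau y)^p\le(1-\tau)d(z,x)^p+\tau d(z,y)^p-\frac c2\tau(1-\tau)d(x,y)^p$. $f$ convex: $f((1-\tau)x\oplus\tau y)\le(1-\tau)f(x)+\tau f(y)$. $\mathrm{prox}^p_{f,\lambda}(x)=\operatorname{argmin}_{y\in G}\{f(y)+\frac1{p\lambda^{p-1}}d(y,x)^p\}$ (single-valued here). $\Delta^{(p,c)}(x,y,u,v)=\frac c4\big(d(x,v)^p+d(y,u)^p-d(x,u)^p-d(y,v)^p\big)$; $\psi^{(p,c)}(x,y,u,v)=\frac c2\big(d(x,u)^p+d(y,v)^p+d(u,v)^p+d(x,y)^p-d(y,u)^p-d(x,v)^p\big)$. A mapping $T$ is a$\alpha$-fne on $G$ with constant $\alpha\in(0,1)$ and violation $\epsilon\ge0$ if $d(Tx,Ty)^p\le(1+\epsilon)d(x,y)^p-\frac{1-\alpha}{\alpha}\psi^{(p,c)}(x,y,Tx,Ty)$ for all $x,y\in G$. *)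

theory Defs
  imports "HOL-Analysis.Analysis"
begin

definition geodesic_path :: "(real \<Rightarrow> 'a::metric_space) \<Rightarrow> 'a \<Rightarrow> 'a \<Rightarrow> bool" where
  "geodesic_path \<gamma> x y \<longleftrightarrow> \<gamma> 0 = x \<and> \<gamma> 1 = y \<and>
     (\<forall>s\<in>{0..1}. \<forall>t\<in>{0..1}. dist (\<gamma> s) (\<gamma> t) = \<bar>s - t\<bar> * dist x y)"

definition uniquely_geodesic :: "'a::metric_space itself \<Rightarrow> bool" where
  "uniquely_geodesic _ \<longleftrightarrow> (\<forall>x y::'a. (\<exists>\<gamma>. geodesic_path \<gamma> x y) \<and>
     (\<forall>\<gamma> \<gamma>'. geodesic_path \<gamma> x y \<longrightarrow> geodesic_path \<gamma>' x y \<longrightarrow> (\<forall>t\<in>{0..1}. \<gamma> t = \<gamma>' t)))"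

definition geod :: "'a::metric_space \<Rightarrow> 'a \<Rightarrow> real \<Rightarrow> 'a" where
  "geod x y \<tau> = (THE z. \<exists>\<gamma>. geodesic_path \<gamma> x y \<and> \<gamma> \<tau> = z)"

definition boundedly_compact :: "'a::metric_space itself \<Rightarrow> bool" where
  "boundedly_compact _ \<longleftrightarrow> (\<forall>S::'a set. bounded S \<and> closed S \<longrightarrow> compact S)"

definition p_uniformly_convex :: "'a::metric_space itself \<Rightarrow> real \<Rightarrow> real \<Rightarrow> bool" where
  "p_uniformly_convex _ p c \<longleftrightarrow> uniquely_geodesic TYPE('a) \<and>
     (\<forall>x y z::'a. \<forall>\<tau>\<in>{0..1}.
        dist z (geod x y \<tau>) powr p \<le> (1 - \<tau>) * dist z x powr p + \<tau> * dist z y powr p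
          - c / 2 * \<tau> * (1 - \<tau>) * dist x y powr p)"

definition geod_convex :: "('a::metric_space \<Rightarrow> real) \<Rightarrow> bool" where
  "geod_convex f \<longleftrightarrow> (\<forall>x y. \<forall>\<tau>\<in>{0..1}. f (geod x y \<tau>) \<le> (1 - \<tau>) * f x + \<tau> * f y)"

definition lsc :: "('a::topological_space \<Rightarrow> real) \<Rightarrow> bool" where
  "lsc f \<longleftrightarrow> (\<forall>x t. t < f x \<longrightarrow> (\<forall>\<^sub>F z in nhds x. t < f z))"

definition argmin_set :: "('a \<Rightarrow> real) \<Rightarrow> 'a set" where
  "argmin_set f = {x. \<forall>y. f x \<le> f y}"

definition prox :: "real \<Rightarrow> ('a::metric_space \<Rightarrow> real) \<Rightarrow> real \<Rightarrow> 'a \<Rightarrow> 'a" where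
  "prox p f lam x = (SOME y. \<forall>z. f y + 1 / (p * lam powr (p - 1)) * dist y x powr p
                              \<le> f z + 1 / (p * lam powr (p - 1)) * dist z x powr p)"

definition Delta :: "real \<Rightarrow> real \<Rightarrow> 'a::metric_space \<Rightarrow> 'a \<Rightarrow> 'a \<Rightarrow> 'a \<Rightarrow> real" where
  "Delta p c x y u v = c / 4 * (dist x v powr p + dist y u powr p - dist x u powr p - dist y v powr p)"

definition Psi :: "real \<Rightarrow> real \<Rightarrow> 'a::metric_space \<Rightarrow> 'a \<Rightarrow> 'a \<Rightarrow> 'a \<Rightarrow> real" where
  "Psi p c x y u v = c / 2 * (dist x u powr p + dist y v powr p + dist u v powr p + dist x y powr p
                              - dist y u powr p - dist x v powr p)"

definition a_fne :: "real \<Rightarrow> real \<Rightarrow> ('a::metric_space \<Rightarrow> 'a) \<Rightarrow> real \<Rightarrow> real \<Rightarrow> bool" where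
  "a_fne p c T \<alpha> \<epsilon> \<longleftrightarrow> 0 < \<alpha> \<and> \<alpha> < 1 \<and> 0 \<le> \<epsilon> \<and>
     (\<forall>x y. dist (T x) (T y) powr p \<le> (1 + \<epsilon>) * dist x y powr p - (1 - \<alpha>) / \<alpha> * Psi p c x y (T x) (T y))"

end

theory Submission
  imports Defs
begin

lemma lsc_min:
  fixes f :: "'a::metric_space \<Rightarrow> real"
  assumes "compact S" "S \<noteq> {}" "lsc f"
  shows "\<exists>x\<in>S. \<forall>y\<in>S. f x \<le> f y"
proof (rule ccontr)
  assume H: "\<not> (\<exists>x\<in>S. \<forall>y\<in>S. f x \<le> f y)"
  have op: "open {z. f y < f z}" for y
    unfolding open_subopen[of "{z. f y < f z}"]
  proof
    fix z assume "z \<in> {z. f y < f z}"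
    then have "f y < f z" by simp
    then have "\<forall>\<^sub>F w in nhds z. f y < f w" using assms(3) unfolding lsc_def by blast
    then obtain U where U: "open U" "z \<in> U" "\<forall>w\<in>U. f y < f w" unfolding eventually_nhds by blast
    then have "U \<subseteq> {z. f y < f z}" by blast
    with U(1,2) show "\<exists>U. open U \<and> z \<in> U \<and> U \<subseteq> {z. f y < f z}" by blast
  qed
  have cov: "S \<subseteq> (\<Union>y\<in>S. {z. f y < f z})"
  proof
    fix x assume "x \<in> S"
    then obtain y where "y \<in> S" "\<not> f x \<le> f y" using H by blast
    then show "x \<in> (\<Union>y\<in>S. {z. f y < f z})" by (auto simp: not_le)
  qed
  obtain T where T: "T \<subseteq> S" "finite T" "S \<subseteq> (\<Union>y\<in>T. {z. f y < f z})"
    using compactE_image[OF assms(1), of S "\<lambda>y. {z. f y < f z}"] op cov by metis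
  have "T \<noteq> {}" using T(3) assms(2) by blast
  obtain y where y: "y \<in> T" "\<forall>w\<in>T. f y \<le> f w"
  proof -
    have "Min (f ` T) \<in> f ` T" using \<open>T \<noteq> {}\<close> T(2) by simp
    then obtain y where "y \<in> T" "f y = Min (f ` T)" by auto
    moreover have "\<forall>w\<in>T. Min (f ` T) \<le> f w" using T(2) by simp
    ultimately show ?thesis using that by metis
  qed
  have "y \<in> S" using y(1) T(1) by blast
  then obtain w where "w \<in> T" "f w < f y" using T(3) by blast
  with y(2) show False by fastforce
qed

lemma geod_dist:
  assumes "uniquely_geodesic TYPE('a::metric_space)" "0 \<le> t" "t \<le> 1"
  shows "dist (x::'a) (geod x y t) = t * dist x y"
proof -
  obtain g where g: "geodesic_path g x y" using assms(1) unfolding uniquely_geodesic_def by blast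
  have "geod x y t = g t"
    unfolding geod_def[of x y t]
  proof (rule the_equality)
    show "\<exists>\<gamma>. geodesic_path \<gamma> x y \<and> \<gamma> t = g t" using g by blast
  next
    fix z assume "\<exists>\<gamma>. geodesic_path \<gamma> x y \<and> \<gamma> t = z"
    then obtain h where "geodesic_path h x y" "h t = z" by blast
    moreover have "\<forall>\<gamma> \<gamma>'. geodesic_path \<gamma> x y \<longrightarrow> geodesic_path \<gamma>' x y \<longrightarrow> (\<forall>t\<in>{0..1}. \<gamma> t = \<gamma>' t)"
      using assms(1) unfolding uniquely_geodesic_def by blast
    ultimately have "\<forall>t\<in>{0..1}. h t = g t" using g by blast
    moreover have "t \<in> {0..1}" using assms(2,3) by simp
    ultimately have "h t = g t" by blast
    then show "z = g t" using \<open>h t = z\<close> by simp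
  qed
  moreover have "dist (g 0) (g t) = \<bar>0 - t\<bar> * dist x y"
  proof -
    have "\<forall>s\<in>{0..1}. \<forall>t\<in>{0..1}. dist (g s) (g t) = \<bar>s - t\<bar> * dist x y"
      using g unfolding geodesic_path_def by blast
    then show ?thesis using assms(2,3) by simp
  qed
  moreover have "g 0 = x" using g unfolding geodesic_path_def by auto
  ultimately show ?thesis using assms by simp
qed

lemma lsc_plus_dist:
  fixes f :: "'a::metric_space \<Rightarrow> real"
  assumes "lsc f" "p > 0"
  shows "lsc (\<lambda>y. f y + k * dist y x powr p)"
  unfolding lsc_def
proof (intro allI impI)
  fix z t assume H: "t < f z + k * dist z x powr p"
  define \<delta> where "\<delta> = f z + k * dist z x powr p - t"
  have dpos: "\<delta> > 0" using H by (simp add: \<delta>_def)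
  have tg: "((\<lambda>w. k * dist w x powr p) \<longlongrightarrow> k * dist z x powr p) (nhds z)"
    apply (rule tendsto_mult_left)
    apply (rule tendsto_powr')
    using assms(2) by (auto intro!: tendsto_intros filterlim_ident)
  have e1: "\<forall>\<^sub>F w in nhds z. f z - \<delta>/2 < f w"
    using assms(1) dpos unfolding lsc_def by auto
  have e2: "\<forall>\<^sub>F w in nhds z. k * dist z x powr p - \<delta>/2 < k * dist w x powr p"
    using order_tendstoD(1)[OF tg, of "k * dist z x powr p - \<delta>/2"] dpos by auto
  show "\<forall>\<^sub>F w in nhds z. t < f w + k * dist w x powr p"
    using eventually_conj[OF e1 e2] by (rule eventually_mono) (auto simp: \<delta>_def field_simps)
qed

lemma prox_exists:
  fixes f :: "'a::metric_space \<Rightarrow> real"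
  assumes bc: "boundedly_compact TYPE('a)" and p: "p > 1" and ug: "uniquely_geodesic TYPE('a)"
    and cf: "geod_convex f" and lf: "lsc f" and k: "k > 0"
  shows "\<exists>y. \<forall>z. f y + k * dist y x powr p \<le> f z + k * dist z x powr p"
proof -
  have cpt: "compact (cball x r)" for r
    using bc unfolding boundedly_compact_def by auto
  obtain x1 where x1: "x1 \<in> cball x 1" "\<forall>y\<in>cball x 1. f x1 \<le> f y"
    using lsc_min[OF cpt _ lf, of 1] by force
  define m where "m = f x1"
  define L where "L = f x - m"
  have L0: "L \<ge> 0" using x1 by (simp add: L_def m_def)
  have lower: "f x - L * (1 + dist x y) \<le> f y" for y
  proof (cases "dist x y \<le> 1")
    case True
    then have "m \<le> f y" using x1 by (simp add: m_def)
    moreover have "L * 1 \<le> L * (1 + dist x y)" using L0 by (intro mult_left_mono) auto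
    ultimately show ?thesis by (simp add: L_def)
  next
    case False
    define d where "d = dist x y"
    have d1: "d > 1" using False by (simp add: d_def)
    define z where "z = geod x y (1/d)"
    have "dist x z = (1/d) * d" unfolding z_def d_def
      by (rule geod_dist[OF ug]) (use d1 d_def in \<open>auto simp: divide_le_eq\<close>)
    then have "dist x z = 1" using d1 by simp
    then have "m \<le> f z" using x1 by (simp add: m_def)
    also have "f z \<le> (1 - 1/d) * f x + (1/d) * f y"
    proof -
      have "1/d \<in> {0..1}" using d1 by (auto simp: divide_le_eq)
      then show ?thesis using cf unfolding geod_convex_def z_def by blast
    qed
    finally have "d * m \<le> d * ((1 - 1/d) * f x + (1/d) * f y)" using d1 by simp
    then have "d * m \<le> (d - 1) * f x + f y" using d1 by (simp add: algebra_simps)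
    then have "f x - L * d \<le> f y" by (simp add: L_def algebra_simps)
    moreover have "L * d \<le> L * (1 + d)" using L0 by (intro mult_left_mono) auto
    ultimately show ?thesis by (simp add: d_def)
  qed
  define R0 where "R0 = (2 * L / k + 1) powr (1 / (p - 1))"
  define R where "R = R0 + 1"
  have R0: "R0 \<ge> 0" by (simp add: R0_def)
  have R0p: "R0 powr (p - 1) = 2 * L / k + 1"
    unfolding R0_def using p L0 k by (simp add: powr_powr)
  have big: "L * (1 + d) < k * d powr p" if "d > R" for d
  proof -
    have d1: "d \<ge> 1" and dR0: "d > R0" using that R0 by (auto simp: R_def)
    have "d powr p = d * d powr (p - 1)"
      using d1 by (simp add: powr_mult_base)
    moreover have "R0 powr (p - 1) < d powr (p - 1)"
      using dR0 R0 p by (intro powr_less_mono2) auto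
    ultimately have "d powr p > d * (2 * L / k + 1)"
      using R0p d1 by auto
    then have "k * d powr p > k * (d * (2 * L / k + 1))" using k by simp
    also have "k * (d * (2 * L / k + 1)) = 2 * L * d + k * d" using k by (simp add: field_simps)
    finally have "k * d powr p > 2 * L * d + k * d" .
    moreover have "L * (1 + d) \<le> 2 * L * d" using L0 d1 mult_left_mono[of 1 d L] by (simp add: algebra_simps)
    moreover have "k * d > 0" using k d1 by simp
    ultimately show ?thesis by linarith
  qed
  obtain y0 where y0: "y0 \<in> cball x R"
    "\<forall>z\<in>cball x R. f y0 + k * dist y0 x powr p \<le> f z + k * dist z x powr p"
    using lsc_min[OF cpt _ lsc_plus_dist[OF lf], of R p k x] p R0 by (force simp: R_def)
  have "f y0 + k * dist y0 x powr p \<le> f z + k * dist z x powr p" for z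
  proof (cases "z \<in> cball x R")
    case True then show ?thesis using y0 by blast
  next
    case False
    then have "dist x z > R" by simp
    then have "L * (1 + dist x z) < k * dist x z powr p" by (rule big)
    then have "f x < f z + k * dist z x powr p" using lower[of z] by (simp add: dist_commute)
    moreover have "x \<in> cball x R" using R0 by (simp add: R_def)
    ultimately show ?thesis using y0(2) by fastforce
  qed
  then show ?thesis by blast
qed

lemma tau_limit:
  fixes A B :: real
  assumes "\<And>\<tau>. 0 < \<tau> \<Longrightarrow> \<tau> < 1 \<Longrightarrow> A + (1 - \<tau>) * B \<le> 0" "B \<ge> 0"
  shows "A + B \<le> 0"
proof (rule ccontr)
  assume "\<not> A + B \<le> 0"
  then have E: "A + B > 0" by simp
  show False
  proof (cases "B = 0")
    case True then show False using assms(1)[of "1/2"] E by simp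
  next
    case False
    then have Bp: "B > 0" using assms(2) by simp
    define t where "t = min (1/2) ((A + B) / (2 * B))"
    have t0: "t > 0" using E Bp by (simp add: t_def)
    have t1: "t < 1" by (simp add: t_def)
    have "t * B \<le> (A + B) / (2 * B) * B" using Bp by (intro mult_right_mono) (auto simp: t_def)
    also have "\<dots> = (A + B) / 2" using Bp by simp
    finally have "t * B \<le> (A + B) / 2" .
    then show False using assms(1)[OF t0 t1] E by (simp add: algebra_simps)
  qed
qed

lemma half_ineq:
  fixes f :: "'a::metric_space \<Rightarrow> real"
  assumes puc: "p_uniformly_convex TYPE('a) p c" and cf: "geod_convex f" and k: "k > 0" and c: "c > 0"
    and Hu: "\<forall>z. f u + k * dist u x powr p \<le> f z + k * dist z x powr p"
  shows "f u + k * dist x u powr p \<le> f v + k * dist x v powr p - k * c / 2 * dist u v powr p"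
proof -
  define A where "A = f u + k * dist x u powr p - f v - k * dist x v powr p"
  define B where "B = k * c / 2 * dist u v powr p"
  have "A + (1 - \<tau>) * B \<le> 0" if t: "0 < \<tau>" "\<tau> < 1" for \<tau>
  proof -
    define w where "w = geod u v \<tau>"
    have tI: "\<tau> \<in> {0..1}" using t by simp
    have h1: "f u + k * dist u x powr p \<le> f w + k * dist w x powr p" using Hu by blast
    have h2: "f w \<le> (1 - \<tau>) * f u + \<tau> * f v" using cf tI unfolding geod_convex_def w_def by blast
    have h3: "dist x w powr p \<le> (1 - \<tau>) * dist x u powr p + \<tau> * dist x v powr p
          - c / 2 * \<tau> * (1 - \<tau>) * dist u v powr p"
      using puc tI unfolding p_uniformly_convex_def w_def by blast
    have h3': "k * dist x w powr p \<le> k * ((1 - \<tau>) * dist x u powr p + \<tau> * dist x v powr p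
          - c / 2 * \<tau> * (1 - \<tau>) * dist u v powr p)"
      using h3 k by (intro mult_left_mono) auto
    have "\<tau> * (A + (1 - \<tau>) * B) \<le> 0"
      using h1 h2 h3' unfolding A_def B_def by (simp add: dist_commute algebra_simps)
    then show ?thesis using t by (simp add: mult_le_0_iff)
  qed
  moreover have "B \<ge> 0" using k c by (simp add: B_def)
  ultimately have "A + B \<le> 0" by (rule tau_limit)
  then show ?thesis by (simp add: A_def B_def)
qed

theorem mainTheorem11:
  fixes f :: "'a::metric_space \<Rightarrow> real" and p c lam :: real
  assumes "boundedly_compact TYPE('a)"
    and "p > 1" and "c > 0"
    and "p_uniformly_convex TYPE('a) p c"
    and "geod_convex f" and "lsc f"
    and "lam > 0"
  shows "argmin_set f \<subseteq> {x. prox p f lam x = x}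
    \<and> (\<forall>x y. Delta p c x y (prox p f lam x) (prox p f lam y) \<ge> c^2 / 4 * dist (prox p f lam x) (prox p f lam y) powr p)
    \<and> (3/2 < c \<and> c \<le> 2 \<longrightarrow> a_fne p c (prox p f lam) (c * (c - 1) / (2 + c * (c - 1))) ((2 - c) / (c - 1)))"
proof -
  define k where "k = 1 / (p * lam powr (p - 1))"
  have k: "k > 0" using assms(2,7) by (simp add: k_def)
  have ug: "uniquely_geodesic TYPE('a)" using assms(4) unfolding p_uniformly_convex_def by blast
  have P: "\<forall>z. f (prox p f lam x) + k * dist (prox p f lam x) x powr p \<le> f z + k * dist z x powr p" for x
    unfolding prox_def k_def[symmetric]
    by (rule someI_ex) (rule prox_exists[OF assms(1,2) ug assms(5,6) k])
  have key: "c * dist (prox p f lam x) (prox p f lam y) powr p \<le>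
     dist x (prox p f lam y) powr p + dist y (prox p f lam x) powr p
     - dist x (prox p f lam x) powr p - dist y (prox p f lam y) powr p" for x y
  proof -
    define u where "u = prox p f lam x"
    define v where "v = prox p f lam y"
    have 1: "f u + k * dist x u powr p \<le> f v + k * dist x v powr p - k * c / 2 * dist u v powr p"
      using half_ineq[OF assms(4,5) k assms(3) P[of x]] by (simp add: u_def)
    have 2: "f v + k * dist y v powr p \<le> f u + k * dist y u powr p - k * c / 2 * dist v u powr p"
      using half_ineq[OF assms(4,5) k assms(3) P[of y]] by (simp add: v_def)
    have "k * (c * dist u v powr p) \<le> k * (dist x v powr p + dist y u powr p
       - dist x u powr p - dist y v powr p)"
      using 1 2 by (simp add: dist_commute algebra_simps)
    then show ?thesis using k by (simp add: u_def v_def)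
  qed
  have i: "argmin_set f \<subseteq> {x. prox p f lam x = x}"
  proof
    fix x assume "x \<in> argmin_set f"
    then have m: "f x \<le> f (prox p f lam x)" by (simp add: argmin_set_def)
    have "f (prox p f lam x) + k * dist (prox p f lam x) x powr p \<le> f x" using spec[OF P[of x], of x] by simp
    then have "k * dist (prox p f lam x) x powr p \<le> 0" using m by simp
    then have "dist (prox p f lam x) x powr p \<le> 0" using k by (simp add: mult_le_0_iff)
    then show "x \<in> {x. prox p f lam x = x}" by simp
  qed
  have ii: "\<forall>x y. Delta p c x y (prox p f lam x) (prox p f lam y) \<ge> c^2 / 4 * dist (prox p f lam x) (prox p f lam y) powr p"
  proof (intro allI)
    fix x y
    have "c / 4 * (c * dist (prox p f lam x) (prox p f lam y) powr p) \<le> c / 4 * (dist x (prox p f lam y) powr p + dist y (prox p f lam x) powr p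
     - dist x (prox p f lam x) powr p - dist y (prox p f lam y) powr p)"
      using key[of x y] assms(3) by (intro mult_left_mono) auto
    then show "Delta p c x y (prox p f lam x) (prox p f lam y) \<ge> c^2 / 4 * dist (prox p f lam x) (prox p f lam y) powr p"
      unfolding Delta_def by (simp add: power2_eq_square)
  qed
  have iii: "a_fne p c (prox p f lam) (c * (c - 1) / (2 + c * (c - 1))) ((2 - c) / (c - 1))"
    if c: "3/2 < c" "c \<le> 2"
  proof -
    have c1: "c - 1 > 0" using c by simp
    have cc: "c * (c - 1) > 0" using c by simp
    have al: "(1 - c * (c - 1) / (2 + c * (c - 1))) / (c * (c - 1) / (2 + c * (c - 1))) = 2 / (c * (c - 1))"
    proof -
      have "(1 - q / (2 + q)) / (q / (2 + q)) = 2 / q" if "q > 0" for q :: real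
      proof -
        have "2 + q > 0" using that by simp
        then have "1 - q / (2 + q) = 2 / (2 + q)" by (simp add: field_simps)
        then show ?thesis using that \<open>2 + q > 0\<close> by (simp add: divide_simps)
      qed
      from this[OF cc] show ?thesis .
    qed
    have ep: "1 + (2 - c) / (c - 1) = 1 / (c - 1)" using c1 by (simp add: field_simps)
    show ?thesis unfolding a_fne_def
    proof (intro conjI allI)
      show "0 < c * (c - 1) / (2 + c * (c - 1))" using cc by simp
      show "c * (c - 1) / (2 + c * (c - 1)) < 1" using cc by simp
      show "0 \<le> (2 - c) / (c - 1)" using c c1 by simp
    next
      fix x y
      define D where "D = dist (prox p f lam x) (prox p f lam y) powr p"
      define a where "a = dist x (prox p f lam x) powr p"
      define b where "b = dist y (prox p f lam y) powr p"
      define e where "e = dist x y powr p"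
      define g where "g = dist y (prox p f lam x) powr p"
      define h where "h = dist x (prox p f lam y) powr p"
      have K: "c * D \<le> h + g - a - b" using key[of x y] by (simp add: D_def a_def b_def g_def h_def)
      have "2 / (c * (c - 1)) * Psi p c x y (prox p f lam x) (prox p f lam y) = (a + b + D + e - g - h) / (c - 1)"
        unfolding Psi_def D_def a_def b_def e_def g_def h_def using c1 c by (simp add: field_simps)
      moreover have "(a + b + D + e - g - h) / (c - 1) \<le> (D + e - c * D) / (c - 1)"
        using K c1 by (intro divide_right_mono) auto
      moreover have "(D + e - c * D) / (c - 1) = 1 / (c - 1) * e - D"
        using c1 by (simp add: field_simps)
      ultimately show "dist (prox p f lam x) (prox p f lam y) powr p
        \<le> (1 + (2 - c) / (c - 1)) * dist x y powr p -
           (1 - c * (c - 1) / (2 + c * (c - 1))) / (c * (c - 1) / (2 + c * (c - 1))) *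
           Psi p c x y (prox p f lam x) (prox p f lam y)"
        unfolding al ep by (simp add: D_def e_def)
    qed
  qed
  show ?thesis using i ii iii by blast
qed

end
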